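(* Let $\mathbf{Y}$ be an $N\times N$ random Hermitian positive semidefinite matrix with finite mean $E[\mathbf{Y}]=\mathbf{M}_y$, and let $\mathbf{A},\mathbf{B}$ be constant $N\times N$ Hermitian matrices with $\mathbf{A}\succ\mathbf{0}$, $\mathbf{B}\succ\mathbf{0}$ and $\mathbf{A}-\mathbf{B}\succeq\mathbf{0}$. Then $$E[\log_2\det(\mathbf{Y}\mathbf{A}+\mathbf{I}_N)]-E[\log_2\det(\mathbf{Y}\mathbf{B}+\mathbf{I}_N)]\le\log_2\det(\mathbf{M}_y\mathbf{A}+\mathbf{I}_N)-\log_2\det(\mathbf{M}_y\mathbf{B}+\mathbf{I}_N).$$
   Context: $\succeq$ and $\succ$ denote the Loewner order (positive semidefinite / positive definite). *)

theory Defs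
  imports "HOL-Analysis.Analysis" "HOL-Probability.Probability"
begin

text \<open>Complex N x N matrices are rendered as complex^'n^'n (N = CARD('n)).\<close>

definition hermitian :: "complex^'n^'n \<Rightarrow> bool" where
  "hermitian A \<longleftrightarrow> (\<forall>i j. A $ i $ j = cnj (A $ j $ i))"

definition qform :: "complex^'n^'n \<Rightarrow> complex^'n \<Rightarrow> complex" where
  "qform A x = (\<Sum>i\<in>UNIV. \<Sum>j\<in>UNIV. cnj (x $ i) * A $ i $ j * x $ j)"

definition psd :: "complex^'n^'n \<Rightarrow> bool" where
  "psd A \<longleftrightarrow> hermitian A \<and> (\<forall>x. Im (qform A x) = 0 \<and> 0 \<le> Re (qform A x))"

definition pd :: "complex^'n^'n \<Rightarrow> bool" where
  "pd A \<longleftrightarrow> hermitian A \<and> (\<forall>x. x \<noteq> 0 \<longrightarrow> Im (qform A x) = 0 \<and> 0 < Re (qform A x))"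

text \<open>log2 det(X + I); det(YA+I) is real positive in the situations considered.\<close>
definition log2det_plus_I :: "complex^'n^'n \<Rightarrow> real" where
  "log2det_plus_I X = log 2 (Re (det (X + mat 1)))"

end

theory Submission
  imports Defs
begin


definition cinner :: "complex^'n \<Rightarrow> complex^'n \<Rightarrow> complex" where
  "cinner x y = (\<Sum>i\<in>UNIV. cnj (x $ i) * y $ i)"

definition outer :: "complex^'n \<Rightarrow> complex^'n \<Rightarrow> complex^'n^'n" where
  "outer u v = (\<chi> i j. u $ i * cnj (v $ j))"

definition adjm :: "complex^'n^'n \<Rightarrow> complex^'n^'n" where
  "adjm A = (\<chi> i j. cnj (A $ j $ i))"

lemma mult_cnj_sq: "z * cnj z = (complex_of_real (cmod z))^2"
  by (metis complex_norm_square of_real_power)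

lemma qform_cinner: "qform A x = cinner x (A *v x)"
  unfolding qform_def cinner_def matrix_vector_mult_def
  by (simp add: sum_distrib_left mult.assoc)

lemma cinner_add_right: "cinner x (y + z) = cinner x y + cinner x z"
  unfolding cinner_def by (simp add: distrib_left sum.distrib)
lemma cinner_diff_right: "cinner x (y - z) = cinner x y - cinner x z"
  unfolding cinner_def by (simp add: right_diff_distrib sum_subtractf)
lemma cinner_add_left: "cinner (x + y) z = cinner x z + cinner y z"
  unfolding cinner_def by (simp add: distrib_right sum.distrib)
lemma cinner_diff_left: "cinner (x - y) z = cinner x z - cinner y z"
  unfolding cinner_def by (simp add: left_diff_distrib sum_subtractf)
lemma cinner_scale_right: "cinner x (c *s y) = c * cinner x y"
  unfolding cinner_def by (simp add: sum_distrib_left algebra_simps)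
lemma cinner_scale_left: "cinner (c *s x) y = cnj c * cinner x y"
  unfolding cinner_def by (simp add: sum_distrib_left algebra_simps)
lemma cinner_commute: "cinner y x = cnj (cinner x y)"
  unfolding cinner_def by (simp add: mult.commute)
lemma cinner_zero_left[simp]: "cinner 0 y = 0" unfolding cinner_def by simp
lemma cinner_zero_right[simp]: "cinner x 0 = 0" unfolding cinner_def by simp

lemma cinner_adj: "cinner x (A *v y) = cinner (adjm A *v x) y"
proof -
  have "cinner x (A *v y) = (\<Sum>i\<in>UNIV. \<Sum>j\<in>UNIV. cnj (x$i) * A$i$j * y$j)"
    unfolding cinner_def matrix_vector_mult_def by (simp add: sum_distrib_left mult.assoc)
  also have "... = (\<Sum>j\<in>UNIV. \<Sum>i\<in>UNIV. cnj (x$i) * A$i$j * y$j)"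
    by (rule sum.swap)
  also have "... = cinner (adjm A *v x) y"
    unfolding cinner_def matrix_vector_mult_def adjm_def
    by (simp add: sum_distrib_left sum_distrib_right mult.commute mult.left_commute)
  finally show ?thesis .
qed

lemma adjm_nth: "adjm A $ i $ j = cnj (A $ j $ i)"
  unfolding adjm_def by simp

lemma hermitianD: "hermitian A \<Longrightarrow> A $ i $ j = cnj (A $ j $ i)"
  unfolding hermitian_def by blast

lemma hermitian_adjm: "hermitian A \<longleftrightarrow> adjm A = A"
proof
  assume h: "hermitian A"
  have "adjm A $ i $ j = A $ i $ j" for i j
    using hermitianD[OF h, of i j] by (simp add: adjm_nth)
  then show "adjm A = A" by (simp add: vec_eq_iff)
next
  assume h: "adjm A = A"
  have "A $ i $ j = cnj (A $ j $ i)" for i j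
    using arg_cong[OF h, of "\<lambda>X. X $ i $ j"] by (simp add: adjm_nth)
  then show "hermitian A" unfolding hermitian_def by blast
qed

lemma cinner_herm: "hermitian A \<Longrightarrow> cinner x (A *v y) = cinner (A *v x) y"
  by (simp add: cinner_adj hermitian_adjm)

lemma qform_herm_real: "hermitian A \<Longrightarrow> Im (qform A x) = 0"
proof -
  assume h: "hermitian A"
  have "qform A x = cinner (A *v x) x" using cinner_herm[OF h] by (simp add: qform_cinner)
  also have "... = cnj (qform A x)" by (simp add: qform_cinner cinner_commute[of "A *v x"])
  finally have "Im (qform A x) = Im (cnj (qform A x))" by simp
  then show ?thesis by simp
qed

lemma cinner_self: "cinner x x = of_real (\<Sum>i\<in>UNIV. (cmod (x$i))^2)"
  unfolding cinner_def by (simp add: mult_cnj_sq mult.commute)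

lemma cinner_self_pos: "x \<noteq> 0 \<Longrightarrow> Re (cinner x x) > 0"
proof -
  assume "x \<noteq> 0"
  then obtain i where i: "x $ i \<noteq> 0" by (metis vec_eq_iff zero_index)
  have "(cmod (x$i))^2 \<le> (\<Sum>i\<in>UNIV. (cmod (x$i))^2)"
    by (rule member_le_sum) auto
  moreover have "(cmod (x$i))^2 > 0" using i by simp
  ultimately have "(\<Sum>i\<in>UNIV. (cmod (x$i))^2) > 0" by linarith
  then show ?thesis by (simp add: cinner_self)
qed

lemma qform_add: "qform (A + B) x = qform A x + qform B x"
  by (simp add: qform_cinner matrix_vector_mult_add_rdistrib cinner_add_right)
lemma qform_diff: "qform (A - B) x = qform A x - qform B x"
  by (simp add: qform_cinner matrix_vector_mult_diff_rdistrib cinner_diff_right)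

lemma outer_mult: "outer u v *v x = cinner v x *s u"
  unfolding outer_def cinner_def matrix_vector_mult_def
  by (simp add: vec_eq_iff sum_distrib_left sum_distrib_right mult.commute mult.left_commute)

lemma qform_outer: "qform (outer u u) x = of_real ((cmod (cinner u x))^2)"
  by (simp add: qform_cinner outer_mult cinner_scale_right cinner_commute[of x u] mult_cnj_sq)

lemma hermitian_add: "hermitian A \<Longrightarrow> hermitian B \<Longrightarrow> hermitian (A + B)"
  unfolding hermitian_def
proof (intro allI)
  fix i j assume "\<forall>i j. A $ i $ j = cnj (A $ j $ i)" "\<forall>i j. B $ i $ j = cnj (B $ j $ i)"
  then have "A $ i $ j = cnj (A $ j $ i)" "B $ i $ j = cnj (B $ j $ i)" by blast+
  then show "(A + B) $ i $ j = cnj ((A + B) $ j $ i)" by simp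
qed
lemma hermitian_diff: "hermitian A \<Longrightarrow> hermitian B \<Longrightarrow> hermitian (A - B)"
  unfolding hermitian_def
proof (intro allI)
  fix i j assume "\<forall>i j. A $ i $ j = cnj (A $ j $ i)" "\<forall>i j. B $ i $ j = cnj (B $ j $ i)"
  then have "A $ i $ j = cnj (A $ j $ i)" "B $ i $ j = cnj (B $ j $ i)" by blast+
  then show "(A - B) $ i $ j = cnj ((A - B) $ j $ i)" by simp
qed
lemma hermitian_outer: "hermitian (outer u u)"
  unfolding hermitian_def outer_def by simp
lemma hermitian_mat1: "hermitian (mat 1)"
  unfolding hermitian_def mat_def by simp
lemma hermitian_zero: "hermitian 0"
  unfolding hermitian_def by simp

lemma psd_add: "psd A \<Longrightarrow> psd B \<Longrightarrow> psd (A + B)"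
  unfolding psd_def by (simp add: hermitian_add qform_add)
lemma pd_psd_add: "pd A \<Longrightarrow> psd B \<Longrightarrow> pd (A + B)"
  unfolding psd_def pd_def by (simp add: hermitian_add qform_add add_pos_nonneg)
lemma psd_outer: "psd (outer u u)"
  unfolding psd_def by (simp add: hermitian_outer qform_outer)
lemma qform_zero_vec[simp]: "qform A 0 = 0"
  unfolding qform_def by simp

lemma pd_psd: "pd A \<Longrightarrow> psd A"
  unfolding psd_def pd_def
  by (metis less_eq_real_def order_refl qform_zero_vec zero_complex.simps)
lemma psd_zero: "psd 0"
  unfolding psd_def qform_def by (simp add: hermitian_zero)

lemma psd_sum_list: "psd (sum_list (map (\<lambda>v. outer v v) vs))"
  by (induction vs) (auto simp: psd_zero psd_add psd_outer)



lemma cinner_axis: "cinner (axis i 1) z = z $ i"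
proof -
  have "\<And>ia. cnj ((axis i (1::complex)) $ ia) * z $ ia = (if ia = i then z $ ia else 0)"
    by (simp add: axis_def)
  then show ?thesis unfolding cinner_def by simp
qed

lemma mult_axis: "(K *v axis i (1::complex)) $ j = K $ j $ i"
proof -
  have "\<And>ia. K $ j $ ia * (axis i (1::complex)) $ ia = (if ia = i then K $ j $ ia else 0)"
    by (simp add: axis_def)
  then show ?thesis unfolding matrix_vector_mult_def by simp
qed

lemma qform_axis: "qform K (axis i 1) = K $ i $ i"
  by (simp add: qform_cinner cinner_axis mult_axis)

lemma psd_diag: "psd K \<Longrightarrow> K $ i $ i = complex_of_real (Re (K $ i $ i)) \<and> Re (K $ i $ i) \<ge> 0"
proof -
  assume p: "psd K"
  have "Im (qform K (axis i 1)) = 0" "0 \<le> Re (qform K (axis i 1))"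
    using p unfolding psd_def by blast+
  then show ?thesis unfolding qform_axis by (simp add: complex_eq_iff)
qed

lemma mv_smult: "A *v (c *s x) = c *s (A *v (x::complex^'n))"
  unfolding matrix_vector_mult_def by (simp add: vec_eq_iff sum_distrib_left mult.left_commute)

lemma qform_expand:
  assumes h: "hermitian K"
  shows "qform K (x + t *s y) = qform K x + t * cinner x (K *v y) + cnj t * cnj (cinner x (K *v y))
     + (cnj t * t) * qform K y"
proof -
  have e: "cinner y (K *v x) = cnj (cinner x (K *v y))"
    using cinner_herm[OF h, of y x] cinner_commute[of "K *v y" x] by simp
  have "qform K (x + t *s y) = cinner (x + t *s y) (K *v x + t *s (K *v y))"
    unfolding qform_cinner by (simp add: matrix_vector_right_distrib mv_smult)
  also have "... = cinner x (K *v x) + t * cinner x (K *v y) + cnj t * cinner y (K *v x)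
     + cnj t * (t * cinner y (K *v y))"
    by (simp add: cinner_add_left cinner_add_right cinner_scale_left cinner_scale_right algebra_simps)
  finally show ?thesis by (simp add: e qform_cinner mult.assoc)
qed

lemma psd_cauchy_schwarz:
  assumes p: "psd K"
  shows "(cmod (cinner x (K *v y)))^2 \<le> Re (qform K x) * Re (qform K y)"
proof -
  define a where "a = Re (qform K x)"
  define c where "c = Re (qform K y)"
  define b where "b = cinner x (K *v y)"
  have h: "hermitian K" using p unfolding psd_def by blast
  have a0: "a \<ge> 0" and c0: "c \<ge> 0" using p unfolding psd_def a_def c_def by auto
  have key: "a - 2 * s * (cmod b)^2 + s^2 * (cmod b)^2 * c \<ge> 0" for s :: real
  proof -
    define t where "t = - (complex_of_real s * cnj b)"
    have "0 \<le> Re (qform K (x + t *s y))" using p unfolding psd_def by blast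
    also have "Re (qform K (x + t *s y)) = a - 2 * s * (cmod b)^2 + s^2 * (cmod b)^2 * c"
    proof -
      have tb: "t * b = - complex_of_real (s * (cmod b)^2)"
      proof -
        have "t * b = - (complex_of_real s * (b * cnj b))" unfolding t_def by (simp add: algebra_simps)
        then show ?thesis by (simp add: mult_cnj_sq)
      qed
      have tt: "cnj t * t = complex_of_real (s^2 * (cmod b)^2)"
      proof -
        have "cnj t * t = complex_of_real s * complex_of_real s * (b * cnj b)"
          unfolding t_def by (simp add: algebra_simps)
        then show ?thesis by (simp add: mult_cnj_sq power2_eq_square)
      qed
      have "cnj t * cnj b = cnj (t * b)" by simp
      then have ctb: "cnj t * cnj b = - complex_of_real (s * (cmod b)^2)" using tb by simp
      show ?thesis
        using qform_expand[OF h, of x t y] unfolding b_def[symmetric]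
        by (simp add: tb ctb tt a_def c_def)
    qed
    finally show ?thesis .
  qed
  define m where "m = (cmod b)^2"
  have m0: "m \<ge> 0" unfolding m_def by simp
  have key': "a - 2 * s * m + s^2 * m * c \<ge> 0" for s using key[of s] unfolding m_def .
  have "m \<le> a * c"
  proof (cases "c = 0")
    case True
    show ?thesis
    proof (rule ccontr)
      assume ne: "\<not> m \<le> a * c"
      then have pos: "m > 0" using True by simp
      have "a - 2 * ((a+1) / (2 * m)) * m \<ge> 0"
        using key'[of "(a+1) / (2 * m)"] True by simp
      also have "2 * ((a+1) / (2 * m)) * m = a + 1"
        using pos by simp
      finally show False by simp
    qed
  next
    case False
    then have cp: "c > 0" using c0 by simp
    have "a - 2 * (1/c) * m + (1/c)^2 * m * c \<ge> 0" using key'[of "1/c"] .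
    also have "(1/c)^2 * m * c = m / c"
      using cp by (simp add: power2_eq_square)
    also have "2 * (1/c) * m = 2 * (m / c)" by simp
    finally have "m / c \<le> a" by simp
    then show "m \<le> a * c" using cp by (simp add: pos_divide_le_eq)
  qed
  then show ?thesis unfolding m_def a_def c_def b_def .
qed

lemma psd_offdiag_zero:
  assumes p: "psd K" and z: "K $ i $ i = 0"
  shows "K $ i $ j = 0" "K $ j $ i = 0"
proof -
  have "(cmod (K $ i $ j))^2 \<le> Re (K $ i $ i) * Re (K $ j $ j)"
    using psd_cauchy_schwarz[OF p, of "axis i 1" "axis j 1"]
    by (simp add: cinner_axis mult_axis qform_axis)
  then show "K $ i $ j = 0" using z by simp
  have "(cmod (K $ j $ i))^2 \<le> Re (K $ j $ j) * Re (K $ i $ i)"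
    using psd_cauchy_schwarz[OF p, of "axis j 1" "axis i 1"]
    by (simp add: cinner_axis mult_axis qform_axis)
  then show "K $ j $ i = 0" using z by simp
qed

lemma psd_gram: "psd K \<Longrightarrow> \<exists>vs. K = sum_list (map (\<lambda>v. outer v v) vs)"
proof (induction "card {i. K $ i $ i \<noteq> 0}" arbitrary: K rule: less_induct)
  case less
  note p = less.prems
  have h: "hermitian K" using p unfolding psd_def by blast
  show ?case
  proof (cases "\<forall>i. K $ i $ i = 0")
    case True
    then have "\<And>i j. K $ i $ j = 0" using psd_offdiag_zero(1)[OF p] by blast
    then have "K = 0" by (simp add: vec_eq_iff)
    then show ?thesis by (intro exI[of _ "[]"]) simp
  next
    case False
    then obtain i where i: "K $ i $ i \<noteq> 0" by blast
    define d where "d = Re (K $ i $ i)"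
    have Kii: "K $ i $ i = complex_of_real d" using psd_diag[OF p, of i] d_def by simp
    have "d \<noteq> 0" using i Kii by auto
    then have d0: "d > 0" using psd_diag[OF p, of i] d_def by simp
    define v where "v = complex_of_real (1 / sqrt d) *s (K *v axis i 1)"
    have vj: "v $ j = complex_of_real (1 / sqrt d) * K $ j $ i" for j
      unfolding v_def vector_smult_component mult_axis ..
    define K' where "K' = K - outer v v"
    have K'jj: "K' $ j $ j = K $ j $ j - complex_of_real ((cmod (K $ j $ i))^2 / d)" for j
    proof -
      have "v $ j * cnj (v $ j) = complex_of_real ((cmod (v $ j))^2)" by (simp add: mult_cnj_sq)
      also have "(cmod (v $ j))^2 = (cmod (K $ j $ i))^2 / d"
      proof -
        have "cmod (v $ j) = cmod (K $ j $ i) / sqrt d" unfolding vj norm_mult using d0 by (simp add: norm_divide)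
        then show ?thesis using d0 by (simp add: power_divide)
      qed
      finally show ?thesis unfolding K'_def outer_def by simp
    qed
    have cv: "cinner v x = complex_of_real (1 / sqrt d) * cinner (axis i 1) (K *v x)" for x
      unfolding v_def by (simp add: cinner_scale_left cinner_herm[OF h, symmetric])
    have pK': "psd K'"
      unfolding psd_def
    proof (intro conjI allI)
      show "hermitian K'" unfolding K'_def by (rule hermitian_diff[OF h hermitian_outer])
      fix x
      have q: "qform K' x = qform K x - complex_of_real ((cmod (cinner v x))^2)"
        unfolding K'_def by (simp add: qform_diff qform_outer)
      have "cmod (cinner v x) = cmod (cinner (axis i 1) (K *v x)) / sqrt d"
        unfolding cv norm_mult using d0 by (simp add: norm_divide)
      then have "(cmod (cinner v x))^2 = (cmod (cinner (axis i 1) (K *v x)))^2 / d"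
        using d0 by (simp add: power_divide)
      also have "... \<le> Re (qform K (axis i 1)) * Re (qform K x) / d"
        using psd_cauchy_schwarz[OF p, of "axis i 1" x] d0 by (simp add: divide_right_mono)
      also have "... = Re (qform K x)" using d0 by (simp add: qform_axis Kii)
      finally have le: "(cmod (cinner v x))^2 \<le> Re (qform K x)" .
      show "Im (qform K' x) = 0" using p unfolding psd_def by (simp add: q)
      show "0 \<le> Re (qform K' x)" using le by (simp add: q)
    qed
    have sub: "{j. K' $ j $ j \<noteq> 0} \<subseteq> {j. K $ j $ j \<noteq> 0} - {i}"
    proof
      fix j assume j: "j \<in> {j. K' $ j $ j \<noteq> 0}"
      show "j \<in> {j. K $ j $ j \<noteq> 0} - {i}"
      proof (cases "j = i")
        case True
        have "K' $ i $ i = 0"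
          using d0 by (simp add: K'jj Kii power2_eq_square)
        then show ?thesis using j True by simp
      next
        case False
        have "K $ j $ j \<noteq> 0"
        proof
          assume "K $ j $ j = 0"
          then have "K $ j $ i = 0" using psd_offdiag_zero[OF p] by blast
          then have "K' $ j $ j = 0" using \<open>K $ j $ j = 0\<close> by (simp add: K'jj)
          then show False using j by simp
        qed
        then show ?thesis using False by simp
      qed
    qed
    have "card {j. K' $ j $ j \<noteq> 0} < card {i. K $ i $ i \<noteq> 0}"
    proof -
      have "card {j. K' $ j $ j \<noteq> 0} \<le> card ({j. K $ j $ j \<noteq> 0} - {i})"
        by (rule card_mono[OF _ sub]) simp
      also have "... < card {i. K $ i $ i \<noteq> 0}"
        using i by (intro card_Diff1_less) auto
      finally show ?thesis .
    qed
    then obtain vs where vs: "K' = sum_list (map (\<lambda>v. outer v v) vs)"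
      using less.hyps[OF _ pK'] by blast
    have "K = sum_list (map (\<lambda>v. outer v v) (v # vs))"
      using vs unfolding K'_def by (simp add: algebra_simps)
    then show ?thesis by blast
  qed
qed



lemma matrix_inv_props:
  assumes "invertible X"
  shows "X ** matrix_inv X = mat 1" "matrix_inv X ** X = mat 1"
proof -
  have "\<exists>A'. X ** A' = mat 1 \<and> A' ** X = mat 1" using assms unfolding invertible_def .
  then have "X ** matrix_inv X = mat 1 \<and> matrix_inv X ** X = mat 1"
    unfolding matrix_inv_def by (rule someI_ex)
  then show "X ** matrix_inv X = mat 1" "matrix_inv X ** X = mat 1" by auto
qed

lemma pd_invertible:
  fixes X :: "complex^'n^'n"
  assumes p: "pd X"
  shows "invertible X"
proof -
  have z: "x = 0" if "X *v x = 0" for x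
  proof (rule ccontr)
    assume "x \<noteq> 0"
    then have "0 < Re (qform X x)" using p unfolding pd_def by blast
    with that show False by (simp add: qform_cinner)
  qed
  have inj: "inj ((*v) X)"
  proof (rule injI)
    fix x y assume "X *v x = X *v y"
    then have "X *v (x - y) = 0" by (simp add: matrix_vector_mult_diff_distrib)
    then show "x = y" using z[of "x - y"] by simp
  qed
  have "det (matrix ((*v) X)) \<noteq> 0"
    using det_nz_iff_inj_gen[OF matrix_vector_mul_linear_gen, of X] inj by simp
  then have "det X \<noteq> 0" by simp
  then show ?thesis using invertible_det_nz by blast
qed

lemma inv_apply: "X ** Xi = mat 1 \<Longrightarrow> X *v (Xi *v u) = u"
  by (simp add: matrix_vector_mul_assoc)

lemma re_cinner_inv_nonneg:
  assumes p: "psd X" and i: "X ** Xi = mat 1"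
  shows "Re (cinner u (Xi *v u)) \<ge> 0"
proof -
  define y where "y = Xi *v u"
  have u: "u = X *v y" unfolding y_def using inv_apply[OF i] by simp
  have "cinner u y = cnj (qform X y)" unfolding u qform_cinner by (simp add: cinner_commute[of y])
  moreover have "Re (qform X y) \<ge> 0" using p unfolding psd_def by blast
  ultimately show ?thesis unfolding y_def by simp
qed

lemma re_cinner_inv_pos:
  assumes p: "pd X" and i: "X ** Xi = mat 1" and u0: "u \<noteq> 0"
  shows "Re (cinner u (Xi *v u)) > 0"
proof -
  define y where "y = Xi *v u"
  have u: "u = X *v y" unfolding y_def using inv_apply[OF i] by simp
  have "y \<noteq> 0" using u u0 by auto
  have "cinner u y = cnj (qform X y)" unfolding u qform_cinner by (simp add: cinner_commute[of y])
  moreover have "Re (qform X y) > 0" using p \<open>y \<noteq> 0\<close> unfolding pd_def by blast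
  ultimately show ?thesis unfolding y_def by simp
qed

lemma tangent_inv:
  assumes p: "psd X" and i: "X ** Xi = mat 1" and i0: "X0 ** X0i = mat 1"
  shows "Re (cinner u (Xi *v u)) \<ge> Re (cinner u (X0i *v u)) - Re (qform (X - X0) (X0i *v u))"
proof -
  have h: "hermitian X" using p unfolding psd_def by blast
  define w where "w = X0i *v u"
  define y where "y = Xi *v u"
  have Xy: "X *v y = u" unfolding y_def using inv_apply[OF i] .
  have X0w: "X0 *v w = u" unfolding w_def using inv_apply[OF i0] .
  have "Re (qform X (y - w)) \<ge> 0" using p unfolding psd_def by blast
  moreover have "qform X (y - w) = cinner y u - cinner u w - cinner w u + cinner w (X *v w)"
  proof -
    have "qform X (y - w) = cinner (y - w) (u - X *v w)"
      unfolding qform_cinner by (simp add: matrix_vector_mult_diff_distrib Xy)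
    also have "... = cinner y u - cinner y (X *v w) - cinner w u + cinner w (X *v w)"
      by (simp add: cinner_diff_left cinner_diff_right)
    also have "cinner y (X *v w) = cinner u w"
      using cinner_herm[OF h, of y w] Xy by simp
    finally show ?thesis .
  qed
  moreover have "qform (X - X0) w = cinner w (X *v w) - cinner w u"
    unfolding qform_diff by (simp add: qform_cinner X0w)
  moreover have "Re (cinner y u) = Re (cinner u y)" by (simp add: cinner_commute[of y])
  moreover have "Re (cinner w u) = Re (cinner u w)" by (simp add: cinner_commute[of w])
  ultimately show ?thesis unfolding w_def[symmetric] y_def[symmetric] by simp
qed

lemma det_replace_row_id:
  fixes v :: "'a::comm_ring_1^'n"
  shows "det (\<chi> i. if i = k then v else (mat 1 :: 'a^'n^'n) $ i) = v $ k"
proof -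
  define M where "M = (\<chi> i. if i = k then v else (mat 1 :: 'a^'n^'n) $ i)"
  have Mij: "M $ i $ j = (if i = k then v $ j else if i = j then 1 else 0)" for i j
    unfolding M_def by (simp add: mat_def)
  have zero: "(\<Prod>i\<in>UNIV. M $ i $ p i) = 0" if p: "p permutes UNIV" "p \<noteq> id" for p
  proof -
    obtain m where m: "p m \<noteq> m" using p(2) by (metis eq_id_iff)
    have "\<exists>i. i \<noteq> k \<and> p i \<noteq> i"
    proof (cases "m = k")
      case False then show ?thesis using m by blast
    next
      case True
      have "p (p k) \<noteq> p k"
      proof
        assume "p (p k) = p k"
        then have "p k = k" using permutes_inj[OF p(1)] by (meson injD)
        then show False using m True by simp
      qed
      moreover have "p k \<noteq> k" using m True by simp
      ultimately show ?thesis by blast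
    qed
    then obtain i where i: "i \<noteq> k" "p i \<noteq> i" by blast
    have "M $ i $ p i = 0" using i by (simp add: Mij)
    then show ?thesis by (intro prod_zero) auto
  qed
  have "det M = (\<Sum>p\<in>{p. p permutes UNIV}. of_int (sign p) * (\<Prod>i\<in>UNIV. M $ i $ p i))"
    unfolding det_def ..
  also have "... = of_int (sign (id::'n\<Rightarrow>'n)) * (\<Prod>i\<in>UNIV. M $ i $ id i)
     + (\<Sum>p\<in>{p. p permutes UNIV} - {id}. of_int (sign p) * (\<Prod>i\<in>UNIV. M $ i $ p i))"
    by (rule sum.remove) (auto simp: finite_permutations permutes_id)
  also have "(\<Sum>p\<in>{p. p permutes UNIV} - {id}. of_int (sign p) * (\<Prod>i\<in>UNIV. M $ i $ p i)) = 0"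
    by (rule sum.neutral) (auto simp: zero)
  also have "(\<Prod>i\<in>UNIV. M $ i $ id i) = M $ k $ k * (\<Prod>i\<in>UNIV - {k}. M $ i $ i)"
    by (simp add: prod.remove[of UNIV k])
  also have "(\<Prod>i\<in>UNIV - {k}. M $ i $ i) = 1"
    by (rule prod.neutral) (auto simp: Mij)
  finally have "det M = v $ k" by (simp add: Mij sign_id)
  then show ?thesis unfolding M_def .
qed

lemma det_rank1_rows:
  fixes A :: "'a::comm_ring_1^'n^'n"
  assumes "finite S"
  shows "det (\<chi> i. if i \<in> S then A $ i + w i *s v else A $ i)
       = det A + (\<Sum>k\<in>S. w k * det (\<chi> i. if i = k then v else A $ i))"
  using assms
proof (induction S arbitrary: A rule: finite_induct)
  case empty
  show ?case by simp
next
  case (insert j S)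
  define B where "B = (\<chi> i. if i \<in> S then A $ i + w i *s v else A $ i)"
  define A' where "A' = (\<chi> i. if i = j then v else A $ i)"
  have Bj: "B $ j = A $ j" unfolding B_def using insert(2) by simp
  have eq1: "(\<chi> i. if i \<in> insert j S then A $ i + w i *s v else A $ i)
        = (\<chi> i. if i = j then B $ i + w j *s v else B $ i)"
    unfolding B_def using insert(2) by (auto simp: vec_eq_iff)
  have "det (\<chi> i. if i = j then B $ i + w j *s v else B $ i)
      = det (\<chi> i. if i = j then B $ i else B $ i) + det (\<chi> i. if i = j then w j *s v else B $ i)"
    by (rule det_row_add)
  also have "(\<chi> i. if i = j then B $ i else B $ i) = B" by (simp add: vec_eq_iff)
  also have "det (\<chi> i. if i = j then w j *s v else B $ i) = w j * det (\<chi> i. if i = j then v else B $ i)"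
    by (rule det_row_mul)
  also have "(\<chi> i. if i = j then v else B $ i) = (\<chi> i. if i \<in> S then A' $ i + w i *s v else A' $ i)"
    unfolding B_def A'_def using insert(2) by (auto simp: vec_eq_iff)
  also have "det (\<chi> i. if i \<in> S then A' $ i + w i *s v else A' $ i)
      = det A' + (\<Sum>k\<in>S. w k * det (\<chi> i. if i = k then v else A' $ i))"
    by (rule insert.IH)
  also have "(\<Sum>k\<in>S. w k * det (\<chi> i. if i = k then v else A' $ i)) = 0"
  proof (rule sum.neutral, intro ballI)
    fix k assume k: "k \<in> S"
    then have kj: "k \<noteq> j" using insert(2) by auto
    have "det (\<chi> i. if i = k then v else A' $ i) = 0"
      by (rule det_identical_rows[OF kj]) (simp add: row_def A'_def kj vec_eq_iff)
    then show "w k * det (\<chi> i. if i = k then v else A' $ i) = 0" by simp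
  qed
  finally have "det (\<chi> i. if i = j then B $ i + w j *s v else B $ i)
     = det B + w j * det (\<chi> i. if i = j then v else A $ i)" by (simp add: A'_def)
  moreover have "det B = det A + (\<Sum>k\<in>S. w k * det (\<chi> i. if i = k then v else A $ i))"
    unfolding B_def by (rule insert.IH)
  ultimately show ?case unfolding eq1 using insert(1,2) by (simp add: algebra_simps)
qed

lemma det_I_outer: "det (mat 1 + outer a q) = 1 + cinner q (a::complex^'n)"
proof -
  define cq where "cq = (\<chi> j. cnj (q $ j))"
  have "mat 1 + outer a q = (\<chi> i. if i \<in> UNIV then (mat 1 :: complex^'n^'n) $ i + (a $ i) *s cq else (mat 1 :: complex^'n^'n) $ i)"
    unfolding outer_def cq_def by (simp add: vec_eq_iff)
  then have "det (mat 1 + outer a q) = 1 + (\<Sum>k\<in>UNIV. a $ k * det (\<chi> i. if i = k then cq else (mat 1 :: complex^'n^'n) $ i))"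
    using det_rank1_rows[of UNIV "mat 1 :: complex^'n^'n" "\<lambda>i. a $ i" cq] by simp
  also have "... = 1 + cinner q a"
    unfolding det_replace_row_id cinner_def cq_def by (simp add: mult.commute)
  finally show ?thesis .
qed

lemma mult_outer: "Z ** outer a q = outer (Z *v a) q"
  unfolding outer_def matrix_matrix_mult_def matrix_vector_mult_def
  by (simp add: vec_eq_iff sum_distrib_right mult.assoc)

lemma det_rank1:
  fixes Z :: "complex^'n^'n"
  assumes i: "Z ** Zi = mat 1"
  shows "det (Z + outer p q) = det Z * (1 + cinner q (Zi *v p))"
proof -
  have "Z + outer p q = Z ** (mat 1 + outer (Zi *v p) q)"
    by (simp add: matrix_add_ldistrib mult_outer inv_apply[OF i])
  then show ?thesis by (simp add: det_mul det_I_outer)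
qed

lemma det_cnj: "det (\<chi> i j. cnj (A $ i $ j)) = cnj (det (A::complex^'n^'n))"
  unfolding det_def by (simp add: cnj_sum cnj_prod)

lemma adjm_transpose: "adjm A = transpose (\<chi> i j. cnj (A $ i $ j))"
  unfolding adjm_def transpose_def by simp

lemma hermitian_det_real: "hermitian A \<Longrightarrow> Im (det A) = 0"
proof -
  assume h: "hermitian A"
  have "det A = det (adjm A)" using h by (simp add: hermitian_adjm)
  also have "... = cnj (det A)" by (simp add: adjm_transpose det_cnj)
  finally have "Im (det A) = Im (cnj (det A))" by simp
  then show ?thesis by simp
qed

lemma continuous_det: "continuous_on S (\<lambda>t. det (f t :: complex^'n^'n))"
  if "continuous_on S f"
  unfolding det_def by (intro continuous_intros that)



lemma scaleR_nth: "(c *\<^sub>R (A::complex^'n^'n)) $ i $ j = complex_of_real c * A $ i $ j"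
  by (simp only: vector_scaleR_component) (simp add: scaleR_conv_of_real)

lemma qform_scaleR: "qform (c *\<^sub>R A) x = complex_of_real c * qform A x"
  unfolding qform_def scaleR_nth by (simp add: sum_distrib_left mult.assoc mult.left_commute)

lemma qform_mat1: "qform (mat 1) x = cinner x x"
  by (simp add: qform_cinner)

lemma hermitian_scaleR: "hermitian A \<Longrightarrow> hermitian (c *\<^sub>R A)"
  unfolding hermitian_def
proof (intro allI)
  fix i j assume "\<forall>i j. A $ i $ j = cnj (A $ j $ i)"
  then have "A $ i $ j = cnj (A $ j $ i)" by blast
  then show "(c *\<^sub>R A) $ i $ j = cnj ((c *\<^sub>R A) $ j $ i)" unfolding scaleR_nth by simp
qed

lemma pd_convex_I:
  assumes p: "pd X" and t: "0 \<le> t" "t \<le> 1"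
  shows "pd (t *\<^sub>R X + (1 - t) *\<^sub>R mat 1)"
  unfolding pd_def
proof (intro conjI allI impI)
  have h: "hermitian X" using p unfolding pd_def by blast
  show "hermitian (t *\<^sub>R X + (1 - t) *\<^sub>R mat 1)"
    by (intro hermitian_add hermitian_scaleR h hermitian_mat1)
  fix x :: "complex^'a" assume x: "x \<noteq> 0"
  have q: "qform (t *\<^sub>R X + (1 - t) *\<^sub>R mat 1) x
      = complex_of_real t * qform X x + complex_of_real (1 - t) * cinner x x"
    by (simp add: qform_add qform_scaleR qform_mat1)
  have qx: "Im (qform X x) = 0" "Re (qform X x) > 0" using p x unfolding pd_def by blast+
  have cx: "Im (cinner x x) = 0" "Re (cinner x x) > 0"
    using cinner_self_pos[OF x] by (auto simp: cinner_self)
  show "Im (qform (t *\<^sub>R X + (1 - t) *\<^sub>R mat 1) x) = 0" using qx cx by (simp add: q)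
  have "t * Re (qform X x) + (1 - t) * Re (cinner x x) > 0"
  proof (cases "t = 0")
    case True then show ?thesis using cx by simp
  next
    case False
    then have "t * Re (qform X x) > 0" using t qx by simp
    moreover have "(1 - t) * Re (cinner x x) \<ge> 0" using t cx by simp
    ultimately show ?thesis by linarith
  qed
  then show "0 < Re (qform (t *\<^sub>R X + (1 - t) *\<^sub>R mat 1) x)" by (simp add: q)
qed

lemma pd_det_pos:
  fixes X :: "complex^'n^'n"
  assumes p: "pd X"
  shows "Im (det X) = 0" "Re (det X) > 0"
proof -
  have h: "hermitian X" using p unfolding pd_def by blast
  show "Im (det X) = 0" by (rule hermitian_det_real[OF h])
  define g where "g t = Re (det (t *\<^sub>R X + (1 - t) *\<^sub>R (mat 1 :: complex^'n^'n)))" for t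
  have cont: "continuous_on {0..1} g"
    unfolding g_def by (intro continuous_intros continuous_det)
  have nz: "g t \<noteq> 0" if "0 \<le> t" "t \<le> 1" for t
  proof -
    have pt: "pd (t *\<^sub>R X + (1 - t) *\<^sub>R mat 1)" by (rule pd_convex_I[OF p that])
    then have "det (t *\<^sub>R X + (1 - t) *\<^sub>R mat 1) \<noteq> 0"
      using pd_invertible invertible_det_nz by blast
    moreover have "Im (det (t *\<^sub>R X + (1 - t) *\<^sub>R mat 1)) = 0"
      using pt unfolding pd_def by (blast intro: hermitian_det_real)
    ultimately show ?thesis unfolding g_def by (simp add: complex_eq_iff)
  qed
  have g0: "g 0 = 1" unfolding g_def by simp
  have g1: "g 1 = Re (det X)" unfolding g_def by simp
  show "Re (det X) > 0"
  proof (rule ccontr)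
    assume "\<not> Re (det X) > 0"
    then have "g 1 \<le> 0" using g1 by simp
    then obtain t where "0 \<le> t" "t \<le> 1" "g t = 0"
      using IVT2'[of g 1 0 0, OF _ _ _ cont] g0 by auto
    then show False using nz by blast
  qed
qed

lemma adjm_mult: "adjm (A ** B) = adjm B ** adjm A"
  unfolding adjm_def matrix_matrix_mult_def by (simp add: vec_eq_iff cnj_sum mult.commute)

lemma adjm_mat1: "adjm (mat 1) = mat 1"
  unfolding adjm_def mat_def by (simp add: vec_eq_iff)

lemma hermitian_inv:
  assumes h: "hermitian X" and i1: "X ** Xi = mat 1" and i2: "Xi ** X = mat 1"
  shows "hermitian Xi"
proof -
  have "adjm Xi ** X = mat 1"
    using arg_cong[OF i1, of adjm] h by (simp add: adjm_mult adjm_mat1 hermitian_adjm)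
  then have "adjm Xi = Xi"
    by (metis i1 matrix_mul_assoc matrix_mul_lid matrix_mul_rid)
  then show ?thesis by (simp add: hermitian_adjm)
qed

lemma pd_inv:
  assumes p: "pd X" and i1: "X ** Xi = mat 1" and i2: "Xi ** X = mat 1"
  shows "pd Xi"
  unfolding pd_def
proof (intro conjI allI impI)
  have h: "hermitian X" using p unfolding pd_def by blast
  show hi: "hermitian Xi" by (rule hermitian_inv[OF h i1 i2])
  fix x :: "complex^'a" assume x: "x \<noteq> 0"
  show "Im (qform Xi x) = 0" by (rule qform_herm_real[OF hi])
  show "0 < Re (qform Xi x)" unfolding qform_cinner by (rule re_cinner_inv_pos[OF p i1 x])
qed

lemma inv_antitone:
  assumes pA: "pd A" and pB: "pd B" and AB: "psd (A - B)"
    and iA: "A ** C = mat 1" "C ** A = mat 1" and iB: "B ** D = mat 1" "D ** B = mat 1"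
  shows "psd (D - C)"
  unfolding psd_def
proof (intro conjI allI)
  have hC: "hermitian C" using pd_inv[OF pA iA] unfolding pd_def by blast
  have hD: "hermitian D" using pd_inv[OF pB iB] unfolding pd_def by blast
  show h: "hermitian (D - C)" by (rule hermitian_diff[OF hD hC])
  fix u
  show "Im (qform (D - C) u) = 0" by (rule qform_herm_real[OF h])
  have "Re (cinner u (D *v u)) \<ge> Re (cinner u (C *v u)) - Re (qform (B - A) (C *v u))"
    by (rule tangent_inv[OF pd_psd[OF pB] iB(1) iA(1)])
  moreover have "Re (qform (B - A) (C *v u)) = - Re (qform (A - B) (C *v u))"
    by (simp add: qform_diff)
  moreover have "Re (qform (A - B) (C *v u)) \<ge> 0" using AB unfolding psd_def by blast
  moreover have "Re (qform (D - C) u) = Re (cinner u (D *v u)) - Re (cinner u (C *v u))"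
    unfolding qform_diff unfolding qform_cinner by simp
  ultimately show "0 \<le> Re (qform (D - C) u)" by linarith
qed



definition ld :: "complex^'n^'n \<Rightarrow> real" where
  "ld X = ln (Re (det X))"

lemma mat_add_rdistrib: "((B::complex^'n^'n) + C) ** A = B ** A + C ** A"
  by (vector matrix_matrix_mult_def sum.distrib[symmetric] field_simps)

lemma complex_real_mult:
  assumes "Im a = 0" "Im b = 0"
  shows "Re (a * b) = Re a * Re b" "Im (a * b) = 0"
  using assms by simp_all

lemma ld_rank1_gen:
  fixes Z :: "complex^'n^'n"
  assumes pZ: "pd Z" and i: "Z ** Zi = mat 1" and pZ': "pd (Z + outer p u)"
  shows "Im (cinner u (Zi *v p)) = 0" "1 + Re (cinner u (Zi *v p)) > 0"
    "ld (Z + outer p u) = ld Z + ln (1 + Re (cinner u (Zi *v p)))"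
proof -
  define a where "a = det Z"
  define b where "b = det (Z + outer p u)"
  define q where "q = cinner u (Zi *v p)"
  have ab: "b = a * (1 + q)" unfolding a_def b_def q_def by (rule det_rank1[OF i])
  have a: "Im a = 0" "Re a > 0" unfolding a_def using pd_det_pos[OF pZ] by auto
  have b: "Im b = 0" "Re b > 0" unfolding b_def using pd_det_pos[OF pZ'] by auto
  have a0: "a \<noteq> 0" using a by auto
  have "1 + q = b / a" using ab a0 by (simp add: field_simps)
  also have "b / a = complex_of_real (Re b / Re a)"
  proof -
    have "b = complex_of_real (Re b)" "a = complex_of_real (Re a)" using a b by (simp_all add: complex_eq_iff)
    then show ?thesis by (metis of_real_divide)
  qed
  finally have q1: "1 + q = complex_of_real (Re b / Re a)" .
  then have "Im (1 + q) = 0" by simp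
  then show "Im q = 0" unfolding q_def by simp
  from q1 have r: "1 + Re q = Re b / Re a" by (metis Re_complex_of_real plus_complex.simps(1) one_complex.simps(1))
  then show "1 + Re q > 0" unfolding q_def using a b by simp
  have "ld (Z + outer p u) = ln (Re b)" unfolding ld_def b_def ..
  also have "ln (Re b) = ln (Re a) + ln (Re b / Re a)"
    using a b by (simp add: ln_div)
  finally show "ld (Z + outer p u) = ld Z + ln (1 + Re q)" unfolding r ld_def a_def .
qed

lemma mv_neg: "A *v (- u) = - (A *v (u::complex^'n))"
  unfolding matrix_vector_mult_def by (simp add: vec_eq_iff sum_negf)

lemma cinner_neg_right: "cinner x (- y) = - cinner x y"
  unfolding cinner_def by (simp add: sum_negf)

lemma outer_neg: "outer (- u) v = - outer u v"
  unfolding outer_def by (simp add: vec_eq_iff)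

definition lin :: "(real \<times> (complex^'n)) list \<Rightarrow> complex^'n^'n \<Rightarrow> real" where
  "lin cws H = sum_list (map (\<lambda>(c, w). c * Re (qform H w)) cws)"

lemma lin_append: "lin (xs @ ys) H = lin xs H + lin ys H"
  unfolding lin_def by simp

lemma step_ineq:
  fixes E M :: "complex^'n^'n"
  assumes pE: "pd E" and pM: "psd M"
  shows "\<exists>c w. \<forall>Y. psd Y \<longrightarrow>
     ld (Y + E + outer u u) - ld (Y + E) \<ge> ld (M + E + outer u u) - ld (M + E) - c * Re (qform (Y - M) w)"
proof -
  have key: "pd (Y + E)" "pd (Y + E + outer u u)" "Im (cinner u (matrix_inv (Y + E + outer u u) *v u)) = 0"
    "Re (cinner u (matrix_inv (Y + E + outer u u) *v u)) < 1"
    "ld (Y + E + outer u u) - ld (Y + E) = - ln (1 - Re (cinner u (matrix_inv (Y + E + outer u u) *v u)))"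
    if pY: "psd Y" for Y
  proof -
    show p1: "pd (Y + E)" using pd_psd_add[OF pE pY] by (simp add: add.commute)
    show p2: "pd (Y + E + outer u u)" by (rule pd_psd_add[OF p1 psd_outer])
    define Z where "Z = Y + E + outer u u"
    have i: "Z ** matrix_inv Z = mat 1" using matrix_inv_props(1)[OF pd_invertible[OF p2]] unfolding Z_def .
    have eq: "Z + outer (- u) u = Y + E" unfolding Z_def outer_neg by simp
    have p3: "pd (Z + outer (- u) u)" using p1 eq by simp
    note r = ld_rank1_gen[OF p2[folded Z_def] i p3]
    have cm: "cinner u (matrix_inv Z *v - u) = - cinner u (matrix_inv Z *v u)"
      by (simp add: mv_neg cinner_neg_right)
    show "Im (cinner u (matrix_inv (Y + E + outer u u) *v u)) = 0" using r(1) cm Z_def by simp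
    show "Re (cinner u (matrix_inv (Y + E + outer u u) *v u)) < 1" using r(2) cm Z_def by simp
    show "ld (Y + E + outer u u) - ld (Y + E) = - ln (1 - Re (cinner u (matrix_inv (Y + E + outer u u) *v u)))"
    proof -
      have r3: "ld (Y + E) = ld Z + ln (1 + Re (cinner u (matrix_inv Z *v - u)))"
        using r(3) unfolding eq .
      then show ?thesis unfolding Z_def[symmetric] using cm by simp
    qed
  qed
  define Z0 where "Z0 = M + E + outer u u"
  define w where "w = matrix_inv Z0 *v u"
  define x0 where "x0 = Re (cinner u (matrix_inv Z0 *v u))"
  have x0: "x0 < 1" unfolding x0_def Z0_def using key(4)[OF pM] .
  have i0: "Z0 ** matrix_inv Z0 = mat 1"
    using matrix_inv_props(1)[OF pd_invertible[OF key(2)[OF pM]]] unfolding Z0_def .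
  show ?thesis
  proof (intro exI allI impI)
    fix Y :: "complex^'n^'n" assume pY: "psd Y"
    define Z where "Z = Y + E + outer u u"
    define x where "x = Re (cinner u (matrix_inv Z *v u))"
    have x: "x < 1" unfolding x_def Z_def using key(4)[OF pY] .
    have iZ: "Z ** matrix_inv Z = mat 1"
      using matrix_inv_props(1)[OF pd_invertible[OF key(2)[OF pY]]] unfolding Z_def .
    have "x \<ge> x0 - Re (qform (Z - Z0) w)"
      unfolding x_def x0_def w_def by (rule tangent_inv[OF pd_psd[OF key(2)[OF pY, folded Z_def]] iZ i0])
    moreover have "Z - Z0 = Y - M" unfolding Z_def Z0_def by simp
    ultimately have xx: "x \<ge> x0 - Re (qform (Y - M) w)" by simp
    have lnineq: "ln (1 - x) - ln (1 - x0) \<le> (x0 - x) / (1 - x0)"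
    proof -
      have pos: "(1 - x) / (1 - x0) > 0" using x x0 by simp
      have "ln ((1 - x) / (1 - x0)) \<le> (1 - x) / (1 - x0) - 1" by (rule ln_le_minus_one[OF pos])
      moreover have "ln ((1 - x) / (1 - x0)) = ln (1 - x) - ln (1 - x0)" using x x0 by (simp add: ln_div)
      moreover have "(1 - x) / (1 - x0) - 1 = (x0 - x) / (1 - x0)" using x0 by (simp add: field_simps)
      ultimately show ?thesis by simp
    qed
    have "(x0 - x) / (1 - x0) \<le> Re (qform (Y - M) w) / (1 - x0)"
      using xx x0 by (simp add: divide_right_mono)
    with lnineq have "- ln (1 - x) \<ge> - ln (1 - x0) - (1 / (1 - x0)) * Re (qform (Y - M) w)"
      by simp
    then show "ld (Y + E + outer u u) - ld (Y + E) \<ge> ld (M + E + outer u u) - ld (M + E) - (1 / (1 - x0)) * Re (qform (Y - M) w)"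
      unfolding key(5)[OF pY] key(5)[OF pM] x_def[unfolded Z_def, symmetric] x0_def[unfolded Z0_def, symmetric] .
  qed
qed

lemma tele_ineq:
  fixes E M :: "complex^'n^'n"
  assumes pE: "pd E" and pM: "psd M"
  shows "\<exists>cws. \<forall>Y. psd Y \<longrightarrow>
     ld (Y + E + sum_list (map (\<lambda>v. outer v v) vs)) - ld (Y + E)
       \<ge> ld (M + E + sum_list (map (\<lambda>v. outer v v) vs)) - ld (M + E) - lin cws (Y - M)"
  using pE
proof (induction vs arbitrary: E)
  case Nil
  show ?case by (intro exI[of _ "[]"]) (simp add: lin_def)
next
  case (Cons v vs)
  have pE': "pd (E + outer v v)" by (rule pd_psd_add[OF Cons.prems psd_outer])
  obtain cws where cws: "\<forall>Y. psd Y \<longrightarrow>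
     ld (Y + (E + outer v v) + sum_list (map (\<lambda>v. outer v v) vs)) - ld (Y + (E + outer v v))
       \<ge> ld (M + (E + outer v v) + sum_list (map (\<lambda>v. outer v v) vs)) - ld (M + (E + outer v v)) - lin cws (Y - M)"
    using Cons.IH[OF pE'] by blast
  obtain c w where cw: "\<forall>Y. psd Y \<longrightarrow>
     ld (Y + E + outer v v) - ld (Y + E) \<ge> ld (M + E + outer v v) - ld (M + E) - c * Re (qform (Y - M) w)"
    using step_ineq[OF Cons.prems pM] by blast
  show ?case
  proof (intro exI[of _ "cws @ [(c, w)]"] allI impI)
    fix Y :: "complex^'n^'n" assume pY: "psd Y"
    have e1: "Y + E + sum_list (map (\<lambda>v. outer v v) (v # vs)) = Y + (E + outer v v) + sum_list (map (\<lambda>v. outer v v) vs)"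
      for Y :: "complex^'n^'n" by (simp add: add.assoc)
    have e2: "Y + (E + outer v v) = Y + E + outer v v" for Y :: "complex^'n^'n" by (simp add: add.assoc)
    show "ld (Y + E + sum_list (map (\<lambda>v. outer v v) (v # vs))) - ld (Y + E)
       \<ge> ld (M + E + sum_list (map (\<lambda>v. outer v v) (v # vs))) - ld (M + E) - lin (cws @ [(c, w)]) (Y - M)"
      using cws[rule_format, OF pY] cw[rule_format, OF pY]
      unfolding e1 e2 lin_append by (simp add: lin_def)
  qed
qed



lemma ld_mult:
  assumes "pd X" "pd Z"
  shows "ln (Re (det (X ** Z))) = ld X + ld Z"
proof -
  have a: "Im (det X) = 0" "Re (det X) > 0" using pd_det_pos[OF assms(1)] by auto
  have b: "Im (det Z) = 0" "Re (det Z) > 0" using pd_det_pos[OF assms(2)] by auto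
  have "Re (det (X ** Z)) = Re (det X) * Re (det Z)" using a b by (simp add: det_mul)
  then show ?thesis unfolding ld_def using a b by (simp add: ln_mult)
qed

lemma log2det_eq:
  assumes pA: "pd A" and iA: "C ** A = mat 1" and pC: "pd C" and pY: "psd Y"
  shows "log2det_plus_I (Y ** A) = (ld (Y + C) + ld A) / ln 2"
proof -
  have "Y ** A + mat 1 = (Y + C) ** A" by (simp add: mat_add_rdistrib iA)
  moreover have "pd (Y + C)" using pd_psd_add[OF pC pY] by (simp add: add.commute)
  ultimately have "ln (Re (det (Y ** A + mat 1))) = ld (Y + C) + ld A"
    using ld_mult[OF _ pA] by simp
  then show ?thesis unfolding log2det_plus_I_def log_def by simp
qed

lemma lin_scale: "lin (map (\<lambda>(c, w). (c / k, w)) cws) H = lin cws H / k"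
  unfolding lin_def by (induction cws) (auto simp: add_divide_distrib)

lemma pointwise:
  fixes A B M :: "complex^'n^'n"
  assumes pA: "pd A" and pB: "pd B" and AB: "psd (A - B)" and pM: "psd M"
  shows "\<exists>cws. \<forall>Y. psd Y \<longrightarrow> log2det_plus_I (Y ** A) - log2det_plus_I (Y ** B)
     \<le> log2det_plus_I (M ** A) - log2det_plus_I (M ** B) + lin cws (Y - M)"
proof -
  define C where "C = matrix_inv A"
  define D where "D = matrix_inv B"
  have iA: "A ** C = mat 1" "C ** A = mat 1" unfolding C_def using matrix_inv_props[OF pd_invertible[OF pA]] by auto
  have iB: "B ** D = mat 1" "D ** B = mat 1" unfolding D_def using matrix_inv_props[OF pd_invertible[OF pB]] by auto
  have pC: "pd C" by (rule pd_inv[OF pA iA])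
  have pD: "pd D" by (rule pd_inv[OF pB iB])
  have DC: "psd (D - C)" by (rule inv_antitone[OF pA pB AB iA iB])
  obtain vs where vs: "D - C = sum_list (map (\<lambda>v. outer v v) vs)" using psd_gram[OF DC] by blast
  obtain cws where cws: "\<forall>Y. psd Y \<longrightarrow>
     ld (Y + C + sum_list (map (\<lambda>v. outer v v) vs)) - ld (Y + C)
       \<ge> ld (M + C + sum_list (map (\<lambda>v. outer v v) vs)) - ld (M + C) - lin cws (Y - M)"
    using tele_ineq[OF pC pM] by blast
  have eqD: "X + C + sum_list (map (\<lambda>v. outer v v) vs) = X + D" for X :: "complex^'n^'n"
    unfolding vs[symmetric] by simp
  have ln2: "ln (2::real) > 0" by simp
  show ?thesis
  proof (intro exI[of _ "map (\<lambda>(c, w). (c / ln 2, w)) cws"] allI impI)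
    fix Y :: "complex^'n^'n" assume pY: "psd Y"
    have t: "ld (Y + D) - ld (Y + C) \<ge> ld (M + D) - ld (M + C) - lin cws (Y - M)"
      using cws pY unfolding eqD by blast
    have "log2det_plus_I (Y ** A) - log2det_plus_I (Y ** B)
       = ((ld (Y + C) + ld A) - (ld (Y + D) + ld B)) / ln 2"
      using log2det_eq[OF pA iA(2) pC pY] log2det_eq[OF pB iB(2) pD pY] by (simp add: diff_divide_distrib)
    also have "... \<le> ((ld (M + C) + ld A) - (ld (M + D) + ld B) + lin cws (Y - M)) / ln 2"
      using t ln2 by (intro divide_right_mono) auto
    also have "... = log2det_plus_I (M ** A) - log2det_plus_I (M ** B) + lin cws (Y - M) / ln 2"
      using log2det_eq[OF pA iA(2) pC pM] log2det_eq[OF pB iB(2) pD pM] by (simp add: add_divide_distrib diff_divide_distrib)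
    finally show "log2det_plus_I (Y ** A) - log2det_plus_I (Y ** B)
     \<le> log2det_plus_I (M ** A) - log2det_plus_I (M ** B) + lin (map (\<lambda>(c, w). (c / ln 2, w)) cws) (Y - M)"
      by (simp add: lin_scale)
  qed
qed

definition tr2 :: "complex^'n^'n \<Rightarrow> complex^'n^'n \<Rightarrow> complex" where
  "tr2 A Y = (\<Sum>i\<in>UNIV. \<Sum>l\<in>UNIV. A $ i $ l * Y $ l $ i)"

lemma tr2_add: "tr2 A (X + Y) = tr2 A X + tr2 A Y"
  unfolding tr2_def by (simp add: distrib_left sum.distrib)

lemma tr2_zero: "tr2 A 0 = 0" unfolding tr2_def by simp

lemma qform_neg: "qform (- P) x = - qform P x"
  unfolding qform_def by (simp add: sum_negf)

lemma tr2_outer: "tr2 A (outer v v) = cinner v (A *v v)"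
  unfolding tr2_def outer_def cinner_def matrix_vector_mult_def
  by (simp add: sum_distrib_left mult.commute mult.left_commute)

lemma tr2_list: "tr2 A (sum_list (map (\<lambda>v. outer v v) vs)) = (\<Sum>v\<leftarrow>vs. cinner v (A *v v))"
  by (induction vs) (simp_all add: tr2_add tr2_outer tr2_zero)

lemma tele_bound:
  fixes E P :: "complex^'n^'n"
  assumes pE: "pd E" and iE: "E ** Ei = mat 1" and pP: "psd P"
  shows "0 \<le> ld (E + P + sum_list (map (\<lambda>v. outer v v) vs)) - ld (E + P)
       \<and> ld (E + P + sum_list (map (\<lambda>v. outer v v) vs)) - ld (E + P) \<le> (\<Sum>v\<leftarrow>vs. Re (cinner v (Ei *v v)))"
  using pP
proof (induction vs arbitrary: P)
  case Nil
  show ?case by simp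
next
  case (Cons v vs)
  define Z where "Z = E + P"
  have pZ: "pd Z" unfolding Z_def by (rule pd_psd_add[OF pE Cons.prems])
  have pZ': "pd (Z + outer v v)" by (rule pd_psd_add[OF pZ psd_outer])
  have iZ: "Z ** matrix_inv Z = mat 1" using matrix_inv_props(1)[OF pd_invertible[OF pZ]] .
  define x where "x = Re (cinner v (matrix_inv Z *v v))"
  have inc: "ld (Z + outer v v) = ld Z + ln (1 + x)"
    unfolding x_def by (rule ld_rank1_gen(3)[OF pZ iZ pZ'])
  have x0: "x \<ge> 0" unfolding x_def by (rule re_cinner_inv_nonneg[OF pd_psd[OF pZ] iZ])
  have "Re (cinner v (Ei *v v)) \<ge> x - Re (qform (E - Z) (matrix_inv Z *v v))"
    unfolding x_def by (rule tangent_inv[OF pd_psd[OF pE] iE iZ])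
  moreover have "Re (qform (E - Z) (matrix_inv Z *v v)) = - Re (qform P (matrix_inv Z *v v))"
    unfolding Z_def by (simp add: qform_neg)
  moreover have "Re (qform P (matrix_inv Z *v v)) \<ge> 0" using Cons.prems unfolding psd_def by blast
  ultimately have xE: "x \<le> Re (cinner v (Ei *v v))" by linarith
  have l1: "ln (1 + x) \<le> x" by (rule ln_add_one_self_le_self[OF x0])
  have l0: "ln (1 + x) \<ge> 0" using x0 by simp
  have pP': "psd (P + outer v v)" by (rule psd_add[OF Cons.prems psd_outer])
  note IH = Cons.IH[OF pP']
  have e1: "E + P + sum_list (map (\<lambda>v. outer v v) (v # vs)) = E + (P + outer v v) + sum_list (map (\<lambda>v. outer v v) vs)"
    by (simp add: algebra_simps)
  have e2: "E + (P + outer v v) = Z + outer v v" unfolding Z_def by (simp add: add.assoc)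
  show ?case unfolding e1 using IH unfolding e2 inc Z_def[symmetric] using l1 l0 xE by simp
qed

lemma log2det_bound:
  fixes A Y :: "complex^'n^'n"
  assumes pA: "pd A" and pY: "psd Y"
  shows "0 \<le> log2det_plus_I (Y ** A)" "log2det_plus_I (Y ** A) \<le> Re (tr2 A Y) / ln 2"
proof -
  define C where "C = matrix_inv A"
  have iA: "A ** C = mat 1" "C ** A = mat 1" unfolding C_def using matrix_inv_props[OF pd_invertible[OF pA]] by auto
  have pC: "pd C" by (rule pd_inv[OF pA iA])
  have "ln (Re (det (C ** A))) = ld C + ld A" by (rule ld_mult[OF pC pA])
  then have ldA: "ld A = - ld C" using iA(2) by simp
  obtain vs where vs: "Y = sum_list (map (\<lambda>v. outer v v) vs)" using psd_gram[OF pY] by blast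
  have b: "0 \<le> ld (C + 0 + sum_list (map (\<lambda>v. outer v v) vs)) - ld (C + 0)
       \<and> ld (C + 0 + sum_list (map (\<lambda>v. outer v v) vs)) - ld (C + 0) \<le> (\<Sum>v\<leftarrow>vs. Re (cinner v (A *v v)))"
    by (rule tele_bound[OF pC iA(2) psd_zero])
  have s: "(\<Sum>v\<leftarrow>vs. Re (cinner v (A *v v))) = Re (tr2 A Y)"
    unfolding vs tr2_list by (induction vs) simp_all
  have eq: "log2det_plus_I (Y ** A) = (ld (Y + C) - ld C) / ln 2"
    using log2det_eq[OF pA iA(2) pC pY] ldA by simp
  have eqY: "Y + C = C + 0 + sum_list (map (\<lambda>v. outer v v) vs)" using vs by (simp add: add.commute)
  show "0 \<le> log2det_plus_I (Y ** A)" unfolding eq eqY using b by simp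
  show "log2det_plus_I (Y ** A) \<le> Re (tr2 A Y) / ln 2" unfolding eq eqY using b s
    by (simp add: divide_right_mono)
qed



lemma cont_detA: "continuous_on UNIV (\<lambda>X::complex^'n^'n. det (X ** A + mat 1))"
proof -
  have e: "(\<lambda>X::complex^'n^'n. det (X ** A + mat 1)) = (\<lambda>X. \<Sum>p\<in>{p. p permutes UNIV}. of_int (sign p) *
     (\<Prod>i\<in>UNIV. (\<Sum>k\<in>UNIV. X $ i $ k * A $ k $ p i) + (mat 1 :: complex^'n^'n) $ i $ p i))"
    by (simp add: det_def matrix_matrix_mult_def fun_eq_iff)
  show ?thesis unfolding e
    by (intro continuous_intros continuous_on_component[OF continuous_on_component[OF continuous_on_id]])
qed

lemma lin_integral:
  fixes Y :: "'w \<Rightarrow> complex^'n^'n"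
  assumes P: "prob_space M"
    and qi: "\<And>w. integrable M (\<lambda>\<omega>. qform (Y \<omega>) w)"
    and qe: "\<And>w. integral\<^sup>L M (\<lambda>\<omega>. qform (Y \<omega>) w) = qform Mi w"
  shows "integrable M (\<lambda>\<omega>. lin cws (Y \<omega> - Mi)) \<and> integral\<^sup>L M (\<lambda>\<omega>. lin cws (Y \<omega> - Mi)) = 0"
proof (induction cws)
  case Nil
  show ?case by (simp add: lin_def)
next
  case (Cons cw cws)
  interpret prob_space M by (rule P)
  obtain c w where cw: "cw = (c, w)" by (cases cw)
  have e: "lin (cw # cws) H = c * Re (qform H w) + lin cws H" for H unfolding lin_def cw by simp
  have e2: "c * Re (qform (Y \<omega> - Mi) w) = c * Re (qform (Y \<omega>) w - qform Mi w)" for \<omega>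
    by (simp add: qform_diff)
  have i0: "integrable M (\<lambda>\<omega>. qform (Y \<omega>) w - qform Mi w)"
    using qi[of w] by (intro Bochner_Integration.integrable_diff) auto
  have i1: "integrable M (\<lambda>\<omega>. c * Re (qform (Y \<omega> - Mi) w))"
    unfolding e2 using integrable_bounded_linear[OF bounded_linear_Re i0] by (intro integrable_mult_right)
  have "integral\<^sup>L M (\<lambda>\<omega>. qform (Y \<omega>) w - qform Mi w) = 0"
    using qi[of w] qe[of w] prob_space by (simp add: Bochner_Integration.integral_diff)
  then have i2: "integral\<^sup>L M (\<lambda>\<omega>. c * Re (qform (Y \<omega> - Mi) w)) = 0"
    unfolding e2 using integral_bounded_linear[OF bounded_linear_Re i0] by simp
  show ?case using Cons.IH i1 i2 by (simp add: e)
qed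

theorem lemma2:
  fixes M :: "'w measure" and Y :: "'w \<Rightarrow> complex^'n^'n"
    and A B :: "complex^'n^'n"
  assumes "prob_space M"
    and "integrable M Y"
    and "\<forall>\<omega>\<in>space M. psd (Y \<omega>)"
    and "pd A" and "pd B" and "psd (A - B)"
  shows "(\<integral>\<omega>. log2det_plus_I (Y \<omega> ** A) \<partial>M) - (\<integral>\<omega>. log2det_plus_I (Y \<omega> ** B) \<partial>M)
         \<le> log2det_plus_I ((\<integral>\<omega>. Y \<omega> \<partial>M) ** A) - log2det_plus_I ((\<integral>\<omega>. Y \<omega> \<partial>M) ** B)"
proof -
  interpret P: prob_space M by (rule assms(1))
  note intY = assms(2) and psdY = assms(3) and pA = assms(4) and pB = assms(5) and AB = assms(6)
  define Mi where "Mi = (\<integral>\<omega>. Y \<omega> \<partial>M)"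
  have Ym: "Y \<in> borel_measurable M" using intY by (rule borel_measurable_integrable)
  have bl: "bounded_linear (\<lambda>X::complex^'n^'n. X $ i $ j)" for i j
    by (rule bounded_linear_compose[OF bounded_linear_vec_nth bounded_linear_vec_nth])
  have ci: "integrable M (\<lambda>\<omega>. Y \<omega> $ i $ j)" for i j
    using integrable_bounded_linear[OF bl intY] .
  have ce: "integral\<^sup>L M (\<lambda>\<omega>. Y \<omega> $ i $ j) = Mi $ i $ j" for i j
    unfolding Mi_def using integral_bounded_linear[OF bl intY] .
  have qi: "integrable M (\<lambda>\<omega>. qform (Y \<omega>) w)" for w
    unfolding qform_def using ci by auto
  have qe: "integral\<^sup>L M (\<lambda>\<omega>. qform (Y \<omega>) w) = qform Mi w" for w
  proof -
    have "integral\<^sup>L M (\<lambda>\<omega>. qform (Y \<omega>) w)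
       = (\<Sum>i\<in>UNIV. \<Sum>j\<in>UNIV. integral\<^sup>L M (\<lambda>\<omega>. cnj (w $ i) * Y \<omega> $ i $ j * w $ j))"
      unfolding qform_def using ci
      by (subst Bochner_Integration.integral_sum, auto intro!: sum.cong Bochner_Integration.integral_sum)
    also have "... = qform Mi w"
      unfolding qform_def using ci ce by simp
    finally show ?thesis .
  qed
  have pMi: "psd Mi"
    unfolding psd_def
  proof (intro conjI allI)
    show "hermitian Mi"
      unfolding hermitian_def
    proof (intro allI)
      fix i j
      have "Mi $ i $ j = integral\<^sup>L M (\<lambda>\<omega>. Y \<omega> $ i $ j)" using ce by simp
      also have "... = integral\<^sup>L M (\<lambda>\<omega>. cnj (Y \<omega> $ j $ i))"
      proof (rule Bochner_Integration.integral_cong[OF refl])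
        fix \<omega> assume "\<omega> \<in> space M"
        then have "hermitian (Y \<omega>)" using psdY unfolding psd_def by blast
        then show "Y \<omega> $ i $ j = cnj (Y \<omega> $ j $ i)" by (rule hermitianD)
      qed
      also have "... = cnj (Mi $ j $ i)" using ce by simp
      finally show "Mi $ i $ j = cnj (Mi $ j $ i)" .
    qed
    fix x
    have "Im (qform Mi x) = integral\<^sup>L M (\<lambda>\<omega>. Im (qform (Y \<omega>) x))"
      using integral_bounded_linear[OF bounded_linear_Im qi[of x]] qe by simp
    also have "... = integral\<^sup>L M (\<lambda>\<omega>. 0)"
      using psdY unfolding psd_def by (intro Bochner_Integration.integral_cong) auto
    finally show "Im (qform Mi x) = 0" by simp
    have "Re (qform Mi x) = integral\<^sup>L M (\<lambda>\<omega>. Re (qform (Y \<omega>) x))"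
      using integral_bounded_linear[OF bounded_linear_Re qi[of x]] qe by simp
    also have "... \<ge> 0"
      using psdY unfolding psd_def by (intro Bochner_Integration.integral_nonneg) auto
    finally show "0 \<le> Re (qform Mi x)" .
  qed
  obtain cws where cws: "\<forall>Y. psd Y \<longrightarrow> log2det_plus_I (Y ** A) - log2det_plus_I (Y ** B)
     \<le> log2det_plus_I (Mi ** A) - log2det_plus_I (Mi ** B) + lin cws (Y - Mi)"
    using pointwise[OF pA pB AB pMi] by blast
  have intf: "integrable M (\<lambda>\<omega>. log2det_plus_I (Y \<omega> ** X))" if pX: "pd X" for X
  proof -
    have h: "(\<lambda>\<omega>. det (Y \<omega> ** X + mat 1)) \<in> borel_measurable M"
      using borel_measurable_continuous_on[OF cont_detA Ym] .
    have meas: "(\<lambda>\<omega>. log2det_plus_I (Y \<omega> ** X)) \<in> borel_measurable M"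
      unfolding log2det_plus_I_def using h by measurable
    have it: "integrable M (\<lambda>\<omega>. Re (tr2 X (Y \<omega>)) / ln 2)"
      unfolding tr2_def using ci by auto
    show ?thesis
    proof (rule Bochner_Integration.integrable_bound[OF it meas], rule AE_I2)
      fix \<omega> assume "\<omega> \<in> space M"
      then have pY: "psd (Y \<omega>)" using psdY by blast
      note b = log2det_bound[OF pX pY]
      have "Re (tr2 X (Y \<omega>)) / ln 2 \<le> \<bar>Re (tr2 X (Y \<omega>))\<bar> / ln 2"
        by (intro divide_right_mono) auto
      then show "norm (log2det_plus_I (Y \<omega> ** X)) \<le> norm (Re (tr2 X (Y \<omega>)) / ln 2)"
        using b by simp
    qed
  qed
  have il: "integrable M (\<lambda>\<omega>. lin cws (Y \<omega> - Mi))" and il0: "integral\<^sup>L M (\<lambda>\<omega>. lin cws (Y \<omega> - Mi)) = 0"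
    using lin_integral[OF assms(1) qi qe] by auto
  define K where "K = log2det_plus_I (Mi ** A) - log2det_plus_I (Mi ** B)"
  have "(\<integral>\<omega>. log2det_plus_I (Y \<omega> ** A) \<partial>M) - (\<integral>\<omega>. log2det_plus_I (Y \<omega> ** B) \<partial>M)
      = (\<integral>\<omega>. log2det_plus_I (Y \<omega> ** A) - log2det_plus_I (Y \<omega> ** B) \<partial>M)"
    using intf[OF pA] intf[OF pB] by (simp add: Bochner_Integration.integral_diff)
  also have "... \<le> (\<integral>\<omega>. K + lin cws (Y \<omega> - Mi) \<partial>M)"
  proof (rule Bochner_Integration.integral_mono)
    show "integrable M (\<lambda>\<omega>. log2det_plus_I (Y \<omega> ** A) - log2det_plus_I (Y \<omega> ** B))"
      using intf[OF pA] intf[OF pB] by auto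
    show "integrable M (\<lambda>\<omega>. K + lin cws (Y \<omega> - Mi))" using il by auto
    fix \<omega> assume "\<omega> \<in> space M"
    then have "psd (Y \<omega>)" using psdY by blast
    then show "log2det_plus_I (Y \<omega> ** A) - log2det_plus_I (Y \<omega> ** B) \<le> K + lin cws (Y \<omega> - Mi)"
      using cws unfolding K_def by blast
  qed
  also have "... = K" using il il0 P.prob_space by simp
  finally show ?thesis unfolding K_def Mi_def .
qed

end
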